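(* Let $k\ge 1$ and $m\ge 0$ be integers, set $A=\lfloor m/k\rfloor$, and let $Q$ be an even polynomial with real coefficients of degree at most $2m$. Then there exist real numbers $C_{a,b,j,l}$, indexed by $0\le a\le A$, $0\le b\le k-1$, $0\le j\le k$, $l\in\{0,1\}$, such that $$Q(x)=\sum_{a=0}^{A}\sum_{b=0}^{k-1}\sum_{j=0}^{k}\sum_{l=0}^{1}C_{a,b,j,l}\,T_a(x)^{2j}\,T_b(x)^{2l}\qquad\text{for all }x,$$ and $$\sum_{a,b,j,l}|C_{a,b,j,l}|\le 3k\,(A+1)(A+2)\,(1+\sqrt2)^{2k}\,\|Q\|_{[-1,1]}.$$ In particular, when $2m=d-k$, this $\ell^1$-norm is $O\big(\|Q\|_{[-1,1]}\,d^2(1+\sqrt2)^{2k}/k\big)$, and each polynomial $T_a(x)^{2j}T_b(x)^{2l}$ equals $\prod_{s=1}^k|\mathcal{R}_s(x)|^2$ on $\mathbb{R}$ for real polynomials $\mathcal{R}_s\in\{1,T_a,T_b,T_aT_b\}$ of definite parity, degree at most $A+k-1$, and $\|\mathcal{R}_s\|_{[-1,1]}\le 1$.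
   Context: $T_m$ denotes the Chebyshev polynomial of the first kind, i.e. the polynomial with $T_m(\cos\theta)=\cos(m\theta)$ for all real $\theta$. For a function $f$ on $[-1,1]$, $\|f\|_{[-1,1]}:=\max_{x\in[-1,1]}|f(x)|$. *)

theory Defs
  imports "HOL-Analysis.Analysis" "HOL-Computational_Algebra.Polynomial"
begin

definition cheb :: "nat \<Rightarrow> real poly" where
  "cheb m = (THE p. \<forall>t::real. poly p (cos t) = cos (real m * t))"

definition supnorm :: "real poly \<Rightarrow> real" where
  "supnorm p = (SUP x\<in>{-1..1}. \<bar>poly p x\<bar>)"

definition even_poly :: "real poly \<Rightarrow> bool" where
  "even_poly p \<longleftrightarrow> (\<forall>x. poly p (-x) = poly p x)"

definition odd_poly :: "real poly \<Rightarrow> bool" where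
  "odd_poly p \<longleftrightarrow> (\<forall>x. poly p (-x) = - poly p x)"

end

theory Submission
  imports Defs
begin


fun chebr :: "nat \<Rightarrow> real poly" where
  "chebr 0 = 1"
| "chebr (Suc 0) = [:0, 1:]"
| "chebr (Suc (Suc n)) = pCons 0 (smult 2 (chebr (Suc n))) - chebr n"

lemma chebr_cos: "poly (chebr n) (cos t) = cos (real n * t)"
proof (induction n rule: chebr.induct)
  case (3 n)
  have "cos (real (Suc (Suc n)) * t) = 2 * cos t * cos (real (Suc n) * t) - cos (real n * t)"
  proof -
    have a: "real (Suc (Suc n)) * t = real (Suc n) * t + t" and b: "real n * t = real (Suc n) * t - t"
      by (simp_all add: algebra_simps)
    show ?thesis unfolding a b cos_add cos_diff by (simp add: algebra_simps)
  qed
  then show ?case using 3 by simp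
qed auto

lemma poly_eq_on_cos:
  fixes p q :: "real poly"
  assumes "\<And>t. poly p (cos t) = poly q (cos t)"
  shows "p = q"
proof -
  have "{-1..1::real} \<subseteq> {x. poly (p - q) x = 0}"
  proof
    fix x :: real assume "x \<in> {-1..1}"
    then have "cos (arccos x) = x" by (simp add: cos_arccos)
    then show "x \<in> {x. poly (p - q) x = 0}" using assms[of "arccos x"] by simp
  qed
  then have "infinite {x. poly (p - q) x = 0}"
    using infinite_super by (metis infinite_Icc_iff neg_less_iff_less zero_less_one less_trans neg_less_0_iff_less)
  then have "p - q = 0" using poly_roots_finite by blast
  then show ?thesis by simp
qed

lemma cheb_eq: "cheb n = chebr n"
  unfolding cheb_def
proof (rule the_equality)
  show "\<forall>t. poly (chebr n) (cos t) = cos (real n * t)" by (simp add: chebr_cos)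
  fix p assume "\<forall>t. poly p (cos t) = cos (real n * t)"
  then show "p = chebr n" by (intro poly_eq_on_cos) (simp add: chebr_cos)
qed

lemma cheb_cos: "poly (cheb n) (cos t) = cos (real n * t)"
  by (simp add: cheb_eq chebr_cos)

lemma cheb_compose: "poly (cheb p) (poly (cheb q) x) = poly (cheb (p * q)) x"
proof -
  have "pcompose (cheb p) (cheb q) = cheb (p * q)"
    by (rule poly_eq_on_cos) (simp add: poly_pcompose cheb_cos mult.assoc)
  then show ?thesis by (metis poly_pcompose)
qed

lemma cheb_prod:
  assumes "q \<le> p"
  shows "2 * poly (cheb p) x * poly (cheb q) x = poly (cheb (p + q)) x + poly (cheb (p - q)) x"
proof -
  have "smult 2 (cheb p * cheb q) = cheb (p + q) + cheb (p - q)"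
  proof (rule poly_eq_on_cos)
    fix t
    have a: "real (p + q) * t = real p * t + real q * t" and b: "real (p - q) * t = real p * t - real q * t"
      using assms by (simp_all add: algebra_simps of_nat_diff)
    show "poly (smult 2 (cheb p * cheb q)) (cos t) = poly (cheb (p + q) + cheb (p - q)) (cos t)"
      unfolding poly_smult poly_mult poly_add cheb_cos a b cos_add cos_diff by simp
  qed
  then show ?thesis by (metis mult.assoc poly_add poly_mult poly_smult)
qed

lemma chebr_minus: "poly (chebr n) (- x) = (-1) ^ n * poly (chebr n) x"
  by (induction n rule: chebr.induct) (auto simp: algebra_simps)

lemma cheb_minus: "poly (cheb n) (- x) = (-1) ^ n * poly (cheb n) x"
  by (simp add: cheb_eq chebr_minus)

lemma chebr_deg: "degree (chebr n) \<le> n \<and> coeff (chebr n) n \<ge> 1"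
proof (induction n rule: chebr.induct)
  case (3 n)
  have d: "degree (pCons 0 (smult 2 (chebr (Suc n))) - chebr n) \<le> Suc (Suc n)"
    using 3 by (intro degree_diff_le) (auto intro: order_trans[OF degree_pCons_le])
  have "coeff (chebr n) (Suc (Suc n)) = 0" using 3 by (intro coeff_eq_0) auto
  then show ?case using d 3 by simp
qed auto

lemma cheb_degree: "degree (cheb n) = n"
proof -
  have "coeff (chebr n) n \<noteq> 0" using chebr_deg[of n] by auto
  then have "n \<le> degree (chebr n)" by (rule le_degree)
  then show ?thesis using chebr_deg[of n] by (simp add: cheb_eq)
qed

lemma chebr_parity: "odd (n + i) \<Longrightarrow> coeff (chebr n) i = 0"
proof (induction n arbitrary: i rule: chebr.induct)
  case 1 then show ?case by (cases i) (auto simp: coeff_1)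
next
  case 2 then show ?case by (cases i) (auto simp: coeff_pCons split: nat.splits intro: Nat.gr0I)
next
  case (3 n)
  then show ?case by (cases i) (auto simp: coeff_pCons)
qed

lemma cheb_abs_le: "x \<in> {-1..1} \<Longrightarrow> \<bar>poly (cheb n) x\<bar> \<le> 1"
  by (metis atLeastAtMost_iff cheb_cos abs_cos_le_one cos_arccos)



definition l1N :: "nat \<Rightarrow> real poly \<Rightarrow> real" where
  "l1N N p = (\<Sum>i\<le>N. \<bar>coeff p i\<bar>)"

lemma l1N_diff: "l1N N (p - q) \<le> l1N N p + l1N N q"
  unfolding l1N_def sum.distrib[symmetric] by (intro sum_mono) (simp add: abs_triangle_ineq4)

lemma l1N_pCons: "l1N (Suc N) (pCons 0 p) = l1N N p"
  unfolding l1N_def sum.atMost_Suc_shift by simp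

lemma l1N_smult: "l1N N (smult c p) = \<bar>c\<bar> * l1N N p"
  unfolding l1N_def by (simp add: sum_distrib_left abs_mult)

lemma l1N_mono_deg: assumes "degree p \<le> N" "N \<le> M" shows "l1N M p = l1N N p"
  unfolding l1N_def
  by (rule sum.mono_neutral_right) (use assms in \<open>auto simp: coeff_eq_0\<close>)

definition Lnum :: "nat \<Rightarrow> real" where
  "Lnum n = ((1 + sqrt 2) ^ n + (1 - sqrt 2) ^ n) / 2"

lemma pow_rec: fixes r :: real assumes "r * r = 2 * r + 1"
  shows "r ^ Suc (Suc n) = 2 * r ^ Suc n + r ^ n"
proof -
  have "r ^ Suc (Suc n) = r ^ n * (r * r)" by (simp add: algebra_simps)
  also have "\<dots> = 2 * r ^ Suc n + r ^ n" using assms by (simp add: algebra_simps)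
  finally show ?thesis .
qed

lemma Lnum_rec: "Lnum (Suc (Suc n)) = 2 * Lnum (Suc n) + Lnum n"
proof -
  have r1: "(1 + sqrt 2) * (1 + sqrt 2) = 2 * (1 + sqrt 2) + 1" and r2: "(1 - sqrt 2) * (1 - sqrt 2) = 2 * (1 - sqrt 2) + 1"
    by (simp_all add: algebra_simps)
  show ?thesis unfolding Lnum_def pow_rec[OF r1] pow_rec[OF r2] by (simp del: power_Suc add: field_simps)
qed

lemma chebr_l1: "l1N n (chebr n) \<le> Lnum n"
proof (induction n rule: chebr.induct)
  case 1 then show ?case by (simp add: l1N_def Lnum_def)
next
  case 2 then show ?case by (simp add: l1N_def Lnum_def)
next
  case (3 n)
  have "l1N (Suc (Suc n)) (chebr (Suc (Suc n))) \<le>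
        l1N (Suc (Suc n)) (pCons 0 (smult 2 (chebr (Suc n)))) + l1N (Suc (Suc n)) (chebr n)"
    by (simp add: l1N_diff)
  also have "l1N (Suc (Suc n)) (chebr n) = l1N n (chebr n)"
    using chebr_deg[of n] by (intro l1N_mono_deg) auto
  also have "l1N (Suc (Suc n)) (pCons 0 (smult 2 (chebr (Suc n)))) = 2 * l1N (Suc n) (chebr (Suc n))"
    by (simp add: l1N_pCons l1N_smult)
  finally show ?case using 3 Lnum_rec[of n] by simp
qed

lemma sum_even_odd: fixes k :: nat shows "(\<Sum>i\<le>2*k. f i) = (\<Sum>j\<le>k. f (2*j)) + (\<Sum>j<k. f (2*j+1))"
proof (induction k)
  case (Suc k)
  have "(\<Sum>i\<le>2*Suc k. f i) = (\<Sum>i\<le>2*k. f i) + f (2*k+1) + f (2*k+2)"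
    by (simp add: numeral_2_eq_2)
  then show ?case using Suc by (simp add: algebra_simps)
qed simp

lemma cheb_even_expand:
  "poly (cheb (2*k)) y = (\<Sum>j\<le>k. coeff (cheb (2*k)) (2*j) * y ^ (2*j))"
proof -
  have "poly (cheb (2*k)) y = (\<Sum>i\<le>2*k. coeff (cheb (2*k)) i * y ^ i)"
    by (simp add: poly_altdef cheb_degree)
  also have "\<dots> = (\<Sum>j\<le>k. coeff (cheb (2*k)) (2*j) * y ^ (2*j))"
    by (simp add: sum_even_odd cheb_eq chebr_parity)
  finally show ?thesis .
qed

lemma cheb_even_l1:
  "(\<Sum>j\<le>k. \<bar>coeff (cheb (2*k)) (2*j)\<bar>) \<le> Lnum (2*k)"
proof -
  have "(\<Sum>j\<le>k. \<bar>coeff (cheb (2*k)) (2*j)\<bar>) = l1N (2*k) (chebr (2*k))"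
    unfolding l1N_def by (simp add: sum_even_odd cheb_eq chebr_parity)
  then show ?thesis using chebr_l1 by simp
qed

lemma Lnum_even: "2 * Lnum (2*k) = (1 + sqrt 2) ^ (2*k) + 1 / (1 + sqrt 2) ^ (2*k)"
proof -
  have "(1 - sqrt 2) ^ (2*k) * (1 + sqrt 2) ^ (2*k) = ((1 - sqrt 2) * (1 + sqrt 2)) ^ (2*k)"
    by (simp add: power_mult_distrib)
  also have "\<dots> = 1" by (simp add: algebra_simps flip: power_mult)
  finally have e: "(1 - sqrt 2) ^ (2*k) * (1 + sqrt 2) ^ (2*k) = 1" .
  have "(1 + sqrt 2) ^ (2*k) > 0" by (intro zero_less_power) (simp add: add_pos_nonneg)
  then have "(1 - sqrt 2) ^ (2*k) = 1 / (1 + sqrt 2) ^ (2*k)"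
    using e by (metis nonzero_mult_div_cancel_right order_less_irrefl)
  then show ?thesis by (simp add: Lnum_def)
qed



lemma cheb_lead: "coeff (cheb n) n \<noteq> 0"
  using chebr_deg[of n] by (simp add: cheb_eq)

lemma cheb_expand:
  fixes p :: "real poly"
  assumes "degree p \<le> N"
  shows "\<exists>c. \<forall>x. poly p x = (\<Sum>n\<le>N. c n * poly (cheb n) x)"
  using assms
proof (induction N arbitrary: p)
  case 0
  then have "\<forall>x. poly p x = coeff p 0" by (simp add: poly_altdef)
  then show ?case by (intro exI[of _ "\<lambda>_. coeff p 0"]) (simp add: cheb_eq)
next
  case (Suc N)
  define f where "f = coeff p (Suc N) / coeff (cheb (Suc N)) (Suc N)"
  define q where "q = p - smult f (cheb (Suc N))"
  have "degree q \<le> N"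
  proof (rule degree_le, intro allI impI)
    fix i assume "N < i"
    show "coeff q i = 0"
    proof (cases "i = Suc N")
      case True then show ?thesis using cheb_lead[of "Suc N"] by (simp add: q_def f_def)
    next
      case False
      then have "Suc N < i" using \<open>N < i\<close> by simp
      then show ?thesis using Suc.prems cheb_degree[of "Suc N"] by (simp add: q_def coeff_eq_0)
    qed
  qed
  then obtain c where c: "\<forall>x. poly q x = (\<Sum>n\<le>N. c n * poly (cheb n) x)" using Suc.IH by blast
  show ?case
  proof (intro exI[of _ "c(Suc N := f)"] allI)
    fix x
    have "poly p x = poly q x + f * poly (cheb (Suc N)) x" by (simp add: q_def)
    also have "\<dots> = (\<Sum>n\<le>Suc N. (c(Suc N := f)) n * poly (cheb n) x)"
      using c by simp
    finally show "poly p x = (\<Sum>n\<le>Suc N. (c(Suc N := f)) n * poly (cheb n) x)" .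
  qed
qed

lemma even_expand:
  assumes "even_poly Q" "degree Q \<le> 2 * m"
  shows "\<exists>d. \<forall>x. poly Q x = (\<Sum>n\<le>m. d n * poly (cheb (2 * n)) x)"
proof -
  obtain c where c: "\<forall>x. poly Q x = (\<Sum>n\<le>2*m. c n * poly (cheb n) x)"
    using cheb_expand[OF assms(2)] by blast
  show ?thesis
  proof (intro exI[of _ "\<lambda>n. c (2*n)"] allI)
    fix x
    have "poly Q x = (poly Q x + poly Q (-x)) / 2" using assms(1) by (simp add: even_poly_def)
    also have "\<dots> = (\<Sum>n\<le>2*m. c n * ((poly (cheb n) x + (-1)^n * poly (cheb n) x) / 2))"
      using c by (simp add: cheb_minus sum.distrib[symmetric] sum_divide_distrib algebra_simps)
    also have "\<dots> = (\<Sum>n\<le>m. c (2*n) * poly (cheb (2 * n)) x)"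
      by (simp add: sum_even_odd)
    finally show "poly Q x = (\<Sum>n\<le>m. c (2*n) * poly (cheb (2 * n)) x)" .
  qed
qed

lemma supnorm_ge:
  assumes "x \<in> {-1..1}"
  shows "\<bar>poly Q x\<bar> \<le> supnorm Q"
proof -
  have "compact ((\<lambda>x. \<bar>poly Q x\<bar>) ` {-1..1::real})"
    by (intro compact_continuous_image continuous_intros) auto
  then have "bdd_above ((\<lambda>x. \<bar>poly Q x\<bar>) ` {-1..1::real})"
    by (intro bounded_imp_bdd_above compact_imp_bounded)
  then show ?thesis unfolding supnorm_def using assms by (intro cSUP_upper) auto
qed

lemma supnorm_le1:
  assumes "\<And>x. x \<in> {-1..1} \<Longrightarrow> \<bar>poly p x\<bar> \<le> 1"
  shows "supnorm p \<le> 1"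
  unfolding supnorm_def using assms by (intro cSUP_least) auto

lemma supnorm_nonneg: "supnorm Q \<ge> 0"
  using supnorm_ge[of 1 Q] by simp

lemma int_cos:
  fixes z :: int
  shows "((\<lambda>t. cos (2 * of_int z * t)) has_integral (if z = 0 then pi else 0)) {0..pi}"
proof (cases "z = 0")
  case True
  then show ?thesis using has_integral_const_real[of "1::real" 0 pi] by (simp add: real_scaleR_def)
next
  case False
  define F :: "real \<Rightarrow> real" where "F t = sin (2 * of_int z * t) / (2 * of_int z)" for t
  have "((\<lambda>t. cos (2 * of_int z * t)) has_integral (F pi - F 0)) {0..pi}"
  proof (rule fundamental_theorem_of_calculus)
    fix t :: real
    have "(F has_real_derivative cos (2 * of_int z * t)) (at t within {0..pi})"
      unfolding F_def using False
      by (auto intro!: derivative_eq_intros)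
    then show "(F has_vector_derivative cos (2 * of_int z * t)) (at t within {0..pi})"
      by (simp add: has_real_derivative_iff_has_vector_derivative)
  qed simp
  moreover have "F pi = 0"
  proof -
    have "sin (2 * of_int z * pi) = 0" using sin_npi_int[of "2*z"] by (simp add: mult_ac)
    then show ?thesis by (simp add: F_def)
  qed
  ultimately show ?thesis using False by (simp add: F_def)
qed

lemma int_cos_prod:
  fixes n p :: nat
  shows "((\<lambda>t. cos (2 * real n * t) * cos (2 * real p * t)) has_integral
           (if n = p then (if p = 0 then pi else pi / 2) else 0)) {0..pi}"
proof -
  have e: "cos (2 * real n * t) * cos (2 * real p * t) =
     cos (2 * of_int (int n - int p) * t) / 2 + cos (2 * of_int (int n + int p) * t) / 2" for t
  proof -
    have a: "2 * of_int (int n - int p) * t = 2 * real n * t - 2 * real p * t"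
     and b: "2 * of_int (int n + int p) * t = 2 * real n * t + 2 * real p * t"
      by (simp_all add: algebra_simps)
    show ?thesis unfolding a b cos_add cos_diff by (simp add: field_simps)
  qed
  have "((\<lambda>t. cos (2 * of_int (int n - int p) * t) / 2 + cos (2 * of_int (int n + int p) * t) / 2)
      has_integral ((if int n - int p = 0 then pi else 0) / 2 + (if int n + int p = 0 then pi else 0) / 2)) {0..pi}"
    by (intro has_integral_add has_integral_divide int_cos)
  moreover have "(\<lambda>t. cos (2 * real n * t) * cos (2 * real p * t)) =
     (\<lambda>t. cos (2 * of_int (int n - int p) * t) / 2 + cos (2 * of_int (int n + int p) * t) / 2)"
    by (rule ext) (rule e)
  moreover have "((if int n - int p = 0 then pi else 0) / 2 + (if int n + int p = 0 then pi else 0) / 2)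
     = (if n = p then (if p = 0 then pi else pi / 2) else 0)" by auto
  ultimately show ?thesis by (simp only:)
qed

lemma coeff_bound:
  fixes Q :: "real poly" and d :: "nat \<Rightarrow> real" and m p :: nat
  assumes d: "\<forall>x. poly Q x = (\<Sum>n\<le>m. d n * poly (cheb (2 * n)) x)" and "p \<le> m"
  shows "\<bar>d p\<bar> \<le> 2 * supnorm Q"
proof -
  have "((\<lambda>t. \<Sum>n\<le>m. d n * (cos (2 * real n * t) * cos (2 * real p * t))) has_integral
         (\<Sum>n\<le>m. d n * (if n = p then (if p = 0 then pi else pi / 2) else 0))) {0..pi}"
    by (intro has_integral_sum has_integral_mult_right int_cos_prod) auto
  moreover have "(\<Sum>n\<le>m. d n * (if n = p then (if p = 0 then pi else pi / 2) else 0)) =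
      d p * (if p = 0 then pi else pi / 2)"
  proof -
    have "(\<Sum>n\<le>m. d n * (if n = p then (if p = 0 then pi else pi / 2) else 0)) =
       (\<Sum>n\<le>m. if n = p then d p * (if p = 0 then pi else pi / 2) else 0)"
      by (intro sum.cong) auto
    also have "\<dots> = d p * (if p = 0 then pi else pi / 2)" using assms(2) by simp
    finally show ?thesis .
  qed
  moreover have "(\<Sum>n\<le>m. d n * (cos (2 * real n * t) * cos (2 * real p * t))) =
       poly Q (cos t) * cos (2 * real p * t)" for t
    using d by (simp add: cheb_cos sum_distrib_right mult.assoc)
  ultimately have I: "((\<lambda>t. poly Q (cos t) * cos (2 * real p * t)) has_integral
        d p * (if p = 0 then pi else pi / 2)) (cbox 0 pi)"
    by simp
  have "norm (d p * (if p = 0 then pi else pi / 2)) \<le> supnorm Q * Henstock_Kurzweil_Integration.content (cbox 0 pi)"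
  proof (rule has_integral_bound[OF supnorm_nonneg I])
    fix t
    have "\<bar>poly Q (cos t)\<bar> \<le> supnorm Q" by (rule supnorm_ge) auto
    moreover have "\<bar>cos (2 * real p * t)\<bar> \<le> 1" by simp
    ultimately have "\<bar>poly Q (cos t)\<bar> * \<bar>cos (2 * real p * t)\<bar> \<le> supnorm Q * 1"
      by (intro mult_mono) auto
    then show "norm (poly Q (cos t) * cos (2 * real p * t)) \<le> supnorm Q"
      by (simp add: abs_mult)
  qed
  then have h: "\<bar>d p\<bar> * (if p = 0 then pi else pi / 2) \<le> supnorm Q * pi"
    by (simp add: abs_mult)
  show ?thesis
  proof (cases "p = 0")
    case True
    with h have "\<bar>d p\<bar> * pi \<le> supnorm Q * pi" by simp
    then have "\<bar>d p\<bar> \<le> supnorm Q" using pi_gt_zero by (rule mult_right_le_imp_le)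
    then show ?thesis using supnorm_nonneg[of Q] by linarith
  next
    case False
    with h have "\<bar>d p\<bar> * (pi / 2) \<le> (2 * supnorm Q) * (pi / 2)" by simp
    moreover have "pi / 2 > 0" using pi_gt_zero by simp
    ultimately show ?thesis by (rule mult_right_le_imp_le)
  qed
qed



definition ev :: "nat \<Rightarrow> nat \<Rightarrow> (nat \<Rightarrow> nat \<Rightarrow> nat \<Rightarrow> nat \<Rightarrow> real) \<Rightarrow> real \<Rightarrow> real" where
  "ev k A C x = (\<Sum>a\<in>{0..A}. \<Sum>b\<in>{0..<k}. \<Sum>j\<in>{0..k}. \<Sum>l\<in>{0..1::nat}.
           C a b j l * poly (cheb a) x ^ (2 * j) * poly (cheb b) x ^ (2 * l))"

definition nrm :: "nat \<Rightarrow> nat \<Rightarrow> (nat \<Rightarrow> nat \<Rightarrow> nat \<Rightarrow> nat \<Rightarrow> real) \<Rightarrow> real" where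
  "nrm k A C = (\<Sum>a\<in>{0..A}. \<Sum>b\<in>{0..<k}. \<Sum>j\<in>{0..k}. \<Sum>l\<in>{0..1::nat}. \<bar>C a b j l\<bar>)"

definition blk :: "nat \<Rightarrow> nat \<Rightarrow> (nat \<Rightarrow> nat \<Rightarrow> real) \<Rightarrow> nat \<Rightarrow> nat \<Rightarrow> nat \<Rightarrow> nat \<Rightarrow> real" where
  "blk a b F = (\<lambda>a' b' j l. if a' = a \<and> b' = b then F j l else 0)"

lemma ev_lin: "ev k A (\<lambda>a b j l. u * C a b j l + D a b j l) x = u * ev k A C x + ev k A D x"
  unfolding ev_def by (simp only: sum.distrib sum_distrib_left algebra_simps)

lemma ev_zero: "ev k A (\<lambda>a b j l. 0) x = 0"
  unfolding ev_def by simp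

lemma ev_sum: "ev k A (\<lambda>a b j l. \<Sum>n\<in>S. c n * f n a b j l) x = (\<Sum>n\<in>S. c n * ev k A (f n) x)"
proof (induction S rule: infinite_finite_induct)
  case (infinite S) then show ?case by (simp add: ev_zero)
next
  case empty then show ?case by (simp add: ev_zero)
next
  case (insert n S)
  then show ?case by (simp add: ev_lin)
qed

lemma nrm_add: "nrm k A (\<lambda>a b j l. u * C a b j l + D a b j l) \<le> \<bar>u\<bar> * nrm k A C + nrm k A D"
proof -
  have "nrm k A (\<lambda>a b j l. u * C a b j l + D a b j l) \<le>
     (\<Sum>a\<in>{0..A}. \<Sum>b\<in>{0..<k}. \<Sum>j\<in>{0..k}. \<Sum>l\<in>{0..1::nat}. \<bar>u\<bar> * \<bar>C a b j l\<bar> + \<bar>D a b j l\<bar>)"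
    unfolding nrm_def by (intro sum_mono) (metis abs_mult abs_triangle_ineq)
  also have "\<dots> = \<bar>u\<bar> * nrm k A C + nrm k A D"
    unfolding nrm_def by (simp only: sum.distrib sum_distrib_left)
  finally show ?thesis .
qed

lemma nrm_diff: "nrm k A (\<lambda>a b j l. u * C a b j l - D a b j l) \<le> \<bar>u\<bar> * nrm k A C + nrm k A D"
proof -
  have "nrm k A (\<lambda>a b j l. u * C a b j l - D a b j l) \<le>
     (\<Sum>a\<in>{0..A}. \<Sum>b\<in>{0..<k}. \<Sum>j\<in>{0..k}. \<Sum>l\<in>{0..1::nat}. \<bar>u\<bar> * \<bar>C a b j l\<bar> + \<bar>D a b j l\<bar>)"
    unfolding nrm_def by (intro sum_mono) (metis abs_mult abs_triangle_ineq4)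
  also have "\<dots> = \<bar>u\<bar> * nrm k A C + nrm k A D"
    unfolding nrm_def by (simp only: sum.distrib sum_distrib_left)
  finally show ?thesis .
qed

lemma nrm_zero: "nrm k A (\<lambda>a b j l. 0) = 0"
  unfolding nrm_def by simp

lemma nrm_sum: "nrm k A (\<lambda>a b j l. \<Sum>n\<in>S. c n * f n a b j l) \<le> (\<Sum>n\<in>S. \<bar>c n\<bar> * nrm k A (f n))"
proof (induction S rule: infinite_finite_induct)
  case (infinite S) then show ?case by (simp add: nrm_zero)
next
  case empty then show ?case by (simp add: nrm_zero)
next
  case (insert n S)
  have "nrm k A (\<lambda>a b j l. \<Sum>n\<in>insert n S. c n * f n a b j l) =
        nrm k A (\<lambda>a b j l. c n * f n a b j l + (\<Sum>n\<in>S. c n * f n a b j l))"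
    using insert by simp
  also have "\<dots> \<le> \<bar>c n\<bar> * nrm k A (f n) + nrm k A (\<lambda>a b j l. \<Sum>n\<in>S. c n * f n a b j l)"
    by (rule nrm_add)
  finally show ?case using insert by simp
qed

lemma sum_delta2:
  assumes "a \<in> S" "b \<in> T" "finite S" "finite T"
  shows "(\<Sum>a'\<in>S. \<Sum>b'\<in>T. if a' = a \<and> b' = b then G a' b' else 0) = G a b"
proof -
  have "(\<Sum>b'\<in>T. if a' = a \<and> b' = b then G a' b' else 0) = (if a' = a then G a' b else 0)" for a'
    using assms by (cases "a' = a") simp_all
  then show ?thesis using assms by simp
qed

lemma ev_blk:
  assumes "a \<le> A" "b < k"
  shows "ev k A (blk a b F) x = (\<Sum>j\<in>{0..k}. \<Sum>l\<in>{0..1::nat}.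
           F j l * poly (cheb a) x ^ (2 * j) * poly (cheb b) x ^ (2 * l))"
proof -
  have "(\<Sum>j\<in>{0..k}. \<Sum>l\<in>{0..1::nat}. blk a b F a' b' j l * poly (cheb a') x ^ (2 * j) * poly (cheb b') x ^ (2 * l))
    = (if a' = a \<and> b' = b then (\<Sum>j\<in>{0..k}. \<Sum>l\<in>{0..1::nat}. F j l * poly (cheb a') x ^ (2 * j) * poly (cheb b') x ^ (2 * l)) else 0)"
    for a' b'
  proof (cases "a' = a \<and> b' = b")
    case True thus ?thesis by (simp add: blk_def)
  next
    case False then have z: "blk a b F a' b' j l = 0" for j l by (auto simp: blk_def)
    show ?thesis using False by (simp only: z if_False) simp
  qed
  then show ?thesis unfolding ev_def using assms by (simp only: sum_delta2[where G = "\<lambda>a' b'. (\<Sum>j\<in>{0..k}. \<Sum>l\<in>{0..1::nat}. F j l * poly (cheb a') x ^ (2 * j) * poly (cheb b') x ^ (2 * l))"] atLeastAtMost_iff atLeastLessThan_iff finite_atLeastAtMost finite_atLeastLessThan zero_le simp_thms)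
qed

lemma nrm_blk:
  assumes "a \<le> A" "b < k"
  shows "nrm k A (blk a b F) = (\<Sum>j\<in>{0..k}. \<Sum>l\<in>{0..1::nat}. \<bar>F j l\<bar>)"
proof -
  have "(\<Sum>j\<in>{0..k}. \<Sum>l\<in>{0..1::nat}. \<bar>blk a b F a' b' j l\<bar>)
    = (if a' = a \<and> b' = b then (\<Sum>j\<in>{0..k}. \<Sum>l\<in>{0..1::nat}. \<bar>F j l\<bar>) else 0)"
    for a' b'
  proof (cases "a' = a \<and> b' = b")
    case True thus ?thesis by (simp add: blk_def)
  next
    case False then have z: "blk a b F a' b' j l = 0" for j l by (auto simp: blk_def)
    show ?thesis using False by (simp only: z if_False) simp
  qed
  then show ?thesis unfolding nrm_def using assms by (simp only: sum_delta2[where G = "\<lambda>a' b'. (\<Sum>j\<in>{0..k}. \<Sum>l\<in>{0..1::nat}. \<bar>F j l\<bar>)"] atLeastAtMost_iff atLeastLessThan_iff finite_atLeastAtMost finite_atLeastLessThan zero_le simp_thms)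
qed



definition tc :: "nat \<Rightarrow> nat \<Rightarrow> real" where "tc k j = coeff (cheb (2*k)) (2*j)"
definition Eb where "Eb k a = blk a 0 (\<lambda>j l. if l = 0 then tc k j else 0)"
definition Gb where "Gb k a b = blk a b (\<lambda>j l. if l = 1 then 2 * tc k j else - tc k j)"
definition Tb where "Tb b = blk 0 b (\<lambda>j l. if j = 0 then (if l = 1 then 2 else -1) else (0::real))"

fun repr :: "nat \<Rightarrow> nat \<Rightarrow> nat \<Rightarrow> nat \<Rightarrow> nat \<Rightarrow> nat \<Rightarrow> nat \<Rightarrow> real" where
  "repr k 0 b = Tb b"
| "repr k (Suc a) b = (if b = 0 then Eb k (Suc a)
      else (\<lambda>a' b' j l. 2 * Gb k (Suc a) b a' b' j l - repr k a (k - b) a' b' j l))"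

lemma ev_diff: "ev k A (\<lambda>a b j l. u * C a b j l - D a b j l) x = u * ev k A C x - ev k A D x"
  unfolding ev_def by (simp only: sum_subtractf sum_distrib_left algebra_simps)

lemma cheb0: "poly (cheb 0) x = 1"
  by (simp add: cheb_eq)

lemma cheb_double: "poly (cheb (2*b)) x = 2 * poly (cheb b) x ^ 2 - 1"
proof -
  have "2 * poly (cheb b) x * poly (cheb b) x = poly (cheb (b + b)) x + poly (cheb (b - b)) x"
    by (rule cheb_prod) simp
  also have "b + b = 2 * b" by simp
  also have "b - b = 0" by simp
  finally show ?thesis by (simp add: cheb0 power2_eq_square)
qed

lemma tc_sum: "(\<Sum>j\<in>{0..k}. tc k j * y ^ (2*j)) = poly (cheb (2*k)) y"
  by (simp add: tc_def cheb_even_expand atLeast0AtMost)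

lemma tc_l1: "(\<Sum>j\<in>{0..k}. \<bar>tc k j\<bar>) \<le> Lnum (2*k)"
  using cheb_even_l1[of k] by (simp add: tc_def atLeast0AtMost)

lemma sum01: "(\<Sum>l\<in>{0..1::nat}. f l) = f 0 + f 1"
proof -
  have "{0..1::nat} = {0, 1}" by auto
  then show ?thesis by simp
qed

lemma ev_blk2: assumes "a \<le> A" "b < k"
  shows "ev k A (blk a b F) x = (\<Sum>j\<in>{0..k}. F j 0 * poly (cheb a) x ^ (2 * j) + F j 1 * poly (cheb a) x ^ (2 * j) * poly (cheb b) x ^ 2)"
  using assms by (simp only: ev_blk sum01) simp

lemma nrm_blk2: assumes "a \<le> A" "b < k"
  shows "nrm k A (blk a b F) = (\<Sum>j\<in>{0..k}. \<bar>F j 0\<bar> + \<bar>F j 1\<bar>)"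
  using assms by (simp only: nrm_blk sum01)

lemma ev_Eb: assumes "a \<le> A" "0 < k"
  shows "ev k A (Eb k a) x = poly (cheb (2*(a*k))) x"
proof -
  have "ev k A (Eb k a) x = (\<Sum>j\<in>{0..k}. tc k j * poly (cheb a) x ^ (2*j))"
    unfolding Eb_def using assms by (simp add: ev_blk2)
  also have "\<dots> = poly (cheb (2*k)) (poly (cheb a) x)" by (rule tc_sum)
  also have "\<dots> = poly (cheb (2*(a*k))) x" by (simp add: cheb_compose mult_ac)
  finally show ?thesis .
qed

lemma ev_Gb: assumes "a \<le> A" "b < k"
  shows "ev k A (Gb k a b) x = poly (cheb (2*(a*k))) x * poly (cheb (2*b)) x"
proof -
  have "ev k A (Gb k a b) x = (\<Sum>j\<in>{0..k}. tc k j * poly (cheb a) x ^ (2*j) * (2 * poly (cheb b) x ^ 2 - 1))"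
    unfolding Gb_def using assms by (simp only: ev_blk2) (intro sum.cong refl, simp add: algebra_simps)
  also have "\<dots> = (\<Sum>j\<in>{0..k}. tc k j * poly (cheb a) x ^ (2*j)) * (2 * poly (cheb b) x ^ 2 - 1)"
    by (simp only: sum_distrib_right)
  also have "\<dots> = poly (cheb (2*(a*k))) x * poly (cheb (2*b)) x"
    by (simp only: tc_sum cheb_compose cheb_double[of b]) (simp add: mult_ac)
  finally show ?thesis .
qed

lemma ev_Tb: assumes "b < k"
  shows "ev k A (Tb b) x = poly (cheb (2*b)) x"
proof -
  have "ev k A (Tb b) x = (\<Sum>j\<in>{0..k}. if j = 0 then 2 * poly (cheb b) x ^ 2 - 1 else 0)"
    unfolding Tb_def using assms by (simp only: ev_blk2 zero_le) (intro sum.cong refl, simp)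
  also have "\<dots> = poly (cheb (2*b)) x" by (simp add: cheb_double)
  finally show ?thesis .
qed

lemma ev_repr:
  assumes "a \<le> A" "b < k"
  shows "ev k A (repr k a b) x = poly (cheb (2*(a*k+b))) x"
  using assms
proof (induction a arbitrary: b)
  case 0 then show ?case by (simp add: ev_Tb)
next
  case (Suc a)
  show ?case
  proof (cases "b = 0")
    case True then show ?thesis using Suc.prems by (simp add: ev_Eb)
  next
    case False
    have ih: "ev k A (repr k a (k - b)) x = poly (cheb (2*(a*k+(k-b)))) x"
      using Suc.IH[of "k - b"] Suc.prems False by simp
    have "ev k A (repr k (Suc a) b) x = 2 * ev k A (Gb k (Suc a) b) x - ev k A (repr k a (k - b)) x"
      using False by (simp add: ev_diff)
    also have "\<dots> = 2 * poly (cheb (2*(Suc a*k))) x * poly (cheb (2*b)) x - poly (cheb (2*(a*k+(k-b)))) x"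
      using Suc.prems by (simp add: ev_Gb ih)
    also have "\<dots> = poly (cheb (2*(Suc a*k) + 2*b)) x + poly (cheb (2*(Suc a*k) - 2*b)) x - poly (cheb (2*(a*k+(k-b)))) x"
      using Suc.prems by (subst cheb_prod) auto
    also have "2*(Suc a*k) - 2*b = 2*(a*k+(k-b))" using Suc.prems by (simp add: algebra_simps)
    also have "2*(Suc a*k) + 2*b = 2*(Suc a * k + b)" by simp
    finally show ?thesis by simp
  qed
qed

lemma nrm_Eb: assumes "a \<le> A" "0 < k" shows "nrm k A (Eb k a) \<le> Lnum (2*k)"
proof -
  have "nrm k A (Eb k a) = (\<Sum>j\<in>{0..k}. \<bar>tc k j\<bar>)"
    unfolding Eb_def using assms by (simp only: nrm_blk2) simp
  then show ?thesis using tc_l1[of k] by simp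
qed

lemma nrm_Gb: assumes "a \<le> A" "b < k" shows "nrm k A (Gb k a b) \<le> 3 * Lnum (2*k)"
proof -
  have "nrm k A (Gb k a b) = (\<Sum>j\<in>{0..k}. 3 * \<bar>tc k j\<bar>)"
    unfolding Gb_def using assms by (simp only: nrm_blk2) (intro sum.cong refl, simp)
  then show ?thesis using tc_l1[of k] by (simp add: sum_distrib_left[symmetric])
qed

lemma nrm_Tb: assumes "b < k" shows "nrm k A (Tb b) = 3"
proof -
  have "nrm k A (Tb b) = (\<Sum>j\<in>{0..k}. if j = 0 then 3 else 0)"
    unfolding Tb_def using assms by (simp only: nrm_blk2 zero_le) (intro sum.cong refl, simp)
  then show ?thesis by simp
qed

definition W :: "nat \<Rightarrow> nat \<Rightarrow> nat \<Rightarrow> real" where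
  "W k a b = (if b = 0 \<and> 0 < a then Lnum (2*k) else 6 * real a * Lnum (2*k) + 3)"

lemma nrm_repr:
  assumes "a \<le> A" "b < k"
  shows "nrm k A (repr k a b) \<le> W k a b"
  using assms
proof (induction a arbitrary: b)
  case 0 then show ?case by (simp add: nrm_Tb W_def)
next
  case (Suc a)
  show ?case
  proof (cases "b = 0")
    case True then show ?thesis using Suc.prems by (simp add: nrm_Eb W_def)
  next
    case False
    have ih: "nrm k A (repr k a (k - b)) \<le> 6 * real a * Lnum (2*k) + 3"
      using Suc.IH[of "k - b"] Suc.prems False by (simp add: W_def)
    have "nrm k A (repr k (Suc a) b) \<le> 2 * nrm k A (Gb k (Suc a) b) + nrm k A (repr k a (k - b))"
      using False nrm_diff[of k A 2 "Gb k (Suc a) b" "repr k a (k - b)"] by simp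
    also have "\<dots> \<le> 2 * (3 * Lnum (2*k)) + (6 * real a * Lnum (2*k) + 3)"
      using nrm_Gb[of "Suc a" A b k] Suc.prems ih by simp
    finally show ?thesis using False by (simp add: W_def algebra_simps)
  qed
qed



lemma P_ge: "(1 + sqrt 2) ^ (2*k) \<ge> real k + 1"
proof -
  have sq: "(1 + sqrt 2) ^ 2 = 1 + (2 + 2 * sqrt 2)"
    by (simp add: power2_eq_square algebra_simps)
  have "(1 + sqrt 2) ^ (2*k) = (1 + (2 + 2 * sqrt 2)) ^ k"
    by (simp only: power_mult sq)
  also have "\<dots> \<ge> 1 + real k * (2 + 2 * sqrt 2)"
    by (rule Bernoulli_inequality) simp
  finally show ?thesis
    using mult_left_mono[of 1 "2 + 2 * sqrt 2" "real k"] by simp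
qed

lemma block_ineq:
  fixes P L K a :: real
  assumes "2 * L = P + e" "P * e = 1" "0 < e" "e \<le> 1" "K + 1 \<le> P" "0 \<le> K" "0 < a"
  shows "L + K * (6 * a * L + 3) \<le> 3 * (K + 1) * (a + 1) * P"
proof -
  have "K * e \<le> P" using assms mult_left_mono[of e 1 K] by simp
  then have "a * (K * e) \<le> a * P" using assms by (intro mult_left_mono) auto
  moreover have "K \<le> K * P" using assms mult_left_mono[of 1 P K] by simp
  moreover have "1 \<le> P" using assms by simp
  moreover have L: "L = (P + e) / 2" using assms(1) by simp
  moreover have "L + K * (6 * a * L + 3) = (P + e) / 2 + 3 * a * (K * P) + 3 * a * (K * e) + 3 * K"
    unfolding L by (simp add: field_simps)
  moreover have "3 * (K + 1) * (a + 1) * P = 3 * a * (K * P) + 3 * (K * P) + 3 * a * P + 3 * P"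
    by (simp add: algebra_simps)
  moreover have "a * e \<le> a" using assms mult_left_mono[of e 1 a] by simp
  moreover have "a \<le> a * P" using assms mult_left_mono[of 1 P a] by simp
  ultimately show ?thesis using assms by linarith
qed

lemma Lnum_props: "2 * Lnum (2*k) = (1 + sqrt 2) ^ (2*k) + 1 / (1 + sqrt 2) ^ (2*k)"
  "(1 + sqrt 2) ^ (2*k) * (1 / (1 + sqrt 2) ^ (2*k)) = 1"
  "0 < 1 / (1 + sqrt 2) ^ (2*k)" "1 / (1 + sqrt 2) ^ (2*k) \<le> 1" "0 \<le> Lnum (2*k)"
proof -
  have p: "(1 + sqrt 2) ^ (2*k) \<ge> 1" using P_ge[of k] by simp
  then have pos: "(1 + sqrt 2) ^ (2*k) > 0" by linarith
  have ne: "1 + sqrt 2 \<noteq> 0" by (metis add_pos_nonneg real_sqrt_ge_zero zero_le_numeral zero_less_one order_less_irrefl)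
  from p pos ne show "2 * Lnum (2*k) = (1 + sqrt 2) ^ (2*k) + 1 / (1 + sqrt 2) ^ (2*k)"
    "(1 + sqrt 2) ^ (2*k) * (1 / (1 + sqrt 2) ^ (2*k)) = 1"
    "0 < 1 / (1 + sqrt 2) ^ (2*k)" "1 / (1 + sqrt 2) ^ (2*k) \<le> 1"
    by (simp_all add: Lnum_even del: power_mult)
  show "0 \<le> Lnum (2*k)" using Lnum_even[of k] p
    by (smt (verit) divide_pos_pos)
qed

lemma W_nonneg: "0 \<le> W k a b"
  using Lnum_props(5)[of k] by (simp add: W_def)

lemma block_sum:
  assumes "1 \<le> k"
  shows "(\<Sum>b<k. W k a b) \<le> 3 * real k * (real a + 1) * (1 + sqrt 2) ^ (2*k)"
proof -
  define P where "P = (1 + sqrt 2) ^ (2*k)"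
  define L where "L = Lnum (2*k)"
  have kP: "real k + 1 \<le> P" unfolding P_def by (rule P_ge)
  have "{..<k} = insert 0 {1..<k}" using assms by auto
  then have "(\<Sum>b<k. W k a b) = W k a 0 + (\<Sum>b\<in>{1..<k}. W k a b)" by simp
  also have "(\<Sum>b\<in>{1..<k}. W k a b) = (\<Sum>b\<in>{1..<k}. 6 * real a * L + 3)"
    by (intro sum.cong) (auto simp: W_def L_def)
  also have "\<dots> = (real k - 1) * (6 * real a * L + 3)" using assms by (simp add: of_nat_diff)
  finally have s: "(\<Sum>b<k. W k a b) = W k a 0 + (real k - 1) * (6 * real a * L + 3)" .
  show ?thesis
  proof (cases "a = 0")
    case True
    then have "(\<Sum>b<k. W k a b) = 3 * real k" using s by (simp add: W_def algebra_simps)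
    also have "\<dots> \<le> 3 * real k * P" using kP mult_left_mono[of 1 P "3 * real k"] by simp
    finally show ?thesis using True by (simp add: P_def)
  next
    case False
    have w0: "W k a 0 = L" using False by (simp add: W_def L_def)
    have "L + (real k - 1) * (6 * real a * L + 3) \<le> 3 * ((real k - 1) + 1) * (real a + 1) * P"
    proof (rule block_ineq[where e = "1 / P"])
      show "2 * L = P + 1 / P" "P * (1 / P) = 1" "0 < 1 / P" "1 / P \<le> 1"
        using Lnum_props[of k] by (simp_all add: L_def P_def)
      show "real k - 1 + 1 \<le> P" "0 \<le> real k - 1" "0 < real a" using kP assms False by auto
    qed
    then show ?thesis using s w0 by (simp add: P_def)
  qed
qed

lemma gauss_real: "(\<Sum>a<n. real a + 1) = real n * (real n + 1) / 2"
  by (induction n) (auto simp: field_simps)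

lemma total_sum:
  assumes "1 \<le> k"
  shows "(\<Sum>n\<le>m. W k (n div k) (n mod k)) \<le>
      3 / 2 * real k * (real (m div k) + 1) * (real (m div k) + 2) * (1 + sqrt 2) ^ (2*k)"
proof -
  define A where "A = m div k"
  define g where "g n = W k (n div k) (n mod k)" for n
  have m1: "m = A * k + m mod k" by (simp add: A_def)
  have m2: "m mod k < k" using assms by simp
  have m_lt: "m < Suc A * k" using m1 m2 by simp
  have "(\<Sum>n\<le>m. g n) \<le> (\<Sum>n<Suc A * k. g n)"
    using m_lt by (intro sum_mono2) (auto simp: g_def W_nonneg)
  also have "\<dots> = (\<Sum>a<Suc A. \<Sum>n\<in>{a * k..<a * k + k}. g n)"
    by (rule sum.nat_group[symmetric])
  also have "\<dots> = (\<Sum>a<Suc A. \<Sum>b<k. W k a b)"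
  proof (rule sum.cong[OF refl])
    fix a
    have "(\<Sum>n\<in>{a * k..<a * k + k}. g n) = (\<Sum>n\<in>{0 + a * k..<k + a * k}. g n)" by (simp add: add.commute)
    also have "\<dots> = (\<Sum>b\<in>{0..<k}. g (b + a * k))" by (rule sum.shift_bounds_nat_ivl)
    also have "\<dots> = (\<Sum>b<k. W k a b)"
      using assms by (intro sum.cong) (auto simp: g_def atLeast0LessThan)
    finally show "(\<Sum>n\<in>{a * k..<a * k + k}. g n) = (\<Sum>b<k. W k a b)" .
  qed
  also have "\<dots> \<le> (\<Sum>a<Suc A. 3 * real k * (real a + 1) * (1 + sqrt 2) ^ (2*k))"
    by (intro sum_mono block_sum assms)
  also have "\<dots> = 3 * real k * (1 + sqrt 2) ^ (2*k) * (\<Sum>a<Suc A. real a + 1)"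
    unfolding sum_distrib_left by (intro sum.cong refl) (simp add: mult_ac)
  also have "\<dots> = 3 / 2 * real k * (real A + 1) * (real A + 2) * (1 + sqrt 2) ^ (2*k)"
    by (simp only: gauss_real) (simp add: field_simps)
  finally show ?thesis by (simp add: g_def A_def)
qed



lemma parity_from:
  assumes "\<And>x. poly p (-x) = (-1) ^ n * poly p x"
  shows "even_poly p \<or> odd_poly p"
proof (cases "even n")
  case True then show ?thesis using assms by (simp add: even_poly_def)
next
  case False then show ?thesis using assms by (simp add: odd_poly_def)
qed

lemma mem_props:
  assumes "p \<in> {1, cheb a, cheb b, cheb a * cheb b}" "a \<le> A" "b < k"
  shows "(even_poly p \<or> odd_poly p) \<and> degree p \<le> A + k - 1 \<and> supnorm p \<le> 1"
proof -
  have par: "even_poly p \<or> odd_poly p"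
  proof -
    have "\<exists>n. \<forall>x. poly p (-x) = (-1) ^ n * poly p x"
      using assms(1)
    proof (elim insertE emptyE)
      assume "p = 1" then show ?thesis by (intro exI[of _ 0]) simp
    next
      assume "p = cheb a" then show ?thesis by (intro exI[of _ a]) (simp add: cheb_minus)
    next
      assume "p = cheb b" then show ?thesis by (intro exI[of _ b]) (simp add: cheb_minus)
    next
      assume "p = cheb a * cheb b" then show ?thesis
        by (intro exI[of _ "a + b"]) (simp add: cheb_minus power_add)
    qed
    then show ?thesis using parity_from by blast
  qed
  have deg: "degree p \<le> A + k - 1"
    using assms(1)
  proof (elim insertE emptyE)
    assume "p = cheb a * cheb b"
    then have "degree p \<le> a + b" using degree_mult_le[of "cheb a" "cheb b"] by (simp add: cheb_degree)
    then show ?thesis using assms by linarith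
  qed (use assms in \<open>auto simp: cheb_degree\<close>)
  have sn: "supnorm p \<le> 1"
  proof (rule supnorm_le1)
    fix x :: real assume x: "x \<in> {-1..1}"
    show "\<bar>poly p x\<bar> \<le> 1"
      using assms(1)
    proof (elim insertE emptyE)
      assume "p = cheb a * cheb b"
      then show ?thesis using cheb_abs_le[OF x, of a] cheb_abs_le[OF x, of b]
        by (simp add: abs_mult mult_le_one)
    qed (auto simp: cheb_abs_le[OF x])
  qed
  show ?thesis using par deg sn by blast
qed

lemma prod_if_le:
  assumes "j \<le> k"
  shows "(\<Prod>s\<in>{1..k}. if s \<le> j then c else 1) = (c::real) ^ j"
proof -
  have "(\<Prod>s\<in>{1..k}. if s \<le> j then c else 1) = (\<Prod>s\<in>{1..k} \<inter> {s. s \<le> j}. c)"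
    by (simp add: prod.If_cases)
  also have "{1..k} \<inter> {s. s \<le> j} = {1..j}" using assms by auto
  finally show ?thesis by simp
qed

lemma R_exists:
  assumes "1 \<le> k" "a \<le> A" "b < k" "j \<le> k" "l \<le> 1"
  shows "\<exists>R :: nat \<Rightarrow> real poly.
          (\<forall>s\<in>{1..k}. R s \<in> {1, cheb a, cheb b, cheb a * cheb b}
              \<and> (even_poly (R s) \<or> odd_poly (R s))
              \<and> degree (R s) \<le> A + k - 1
              \<and> supnorm (R s) \<le> 1)
          \<and> (\<forall>x::real. poly (cheb a) x ^ (2 * j) * poly (cheb b) x ^ (2 * l)
                = (\<Prod>s\<in>{1..k}. \<bar>poly (R s) x\<bar> ^ 2))"
proof -
  define R where "R s = (if s \<le> j then cheb a else 1) * (if s = 1 \<and> l = 1 then cheb b else 1)" for s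
  have mem: "R s \<in> {1, cheb a, cheb b, cheb a * cheb b}" for s
    unfolding R_def by auto
  have prod: "poly (cheb a) x ^ (2 * j) * poly (cheb b) x ^ (2 * l) = (\<Prod>s\<in>{1..k}. \<bar>poly (R s) x\<bar> ^ 2)" for x
  proof -
    have "(\<Prod>s\<in>{1..k}. \<bar>poly (R s) x\<bar> ^ 2) =
        (\<Prod>s\<in>{1..k}. (if s \<le> j then poly (cheb a) x ^ 2 else 1) * (if s = 1 then (if l = 1 then poly (cheb b) x ^ 2 else 1) else 1))"
      by (intro prod.cong refl) (simp add: R_def power_mult_distrib)
    also have "\<dots> = (\<Prod>s\<in>{1..k}. if s \<le> j then poly (cheb a) x ^ 2 else 1) *
        (\<Prod>s\<in>{1..k}. if s = 1 then (if l = 1 then poly (cheb b) x ^ 2 else 1) else 1)"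
      by (rule prod.distrib)
    also have "\<dots> = (poly (cheb a) x ^ 2) ^ j * (if l = 1 then poly (cheb b) x ^ 2 else 1)"
      unfolding prod_if_le[OF assms(4)] using assms(1) by simp
    also have "\<dots> = poly (cheb a) x ^ (2 * j) * poly (cheb b) x ^ (2 * l)"
      using assms(5) by (cases l) (auto simp: power_mult)
    finally show ?thesis by simp
  qed
  show ?thesis
    using mem mem_props[OF mem assms(2,3)] prod by (intro exI[of _ R]) auto
qed

theorem mainTheorem8:
  fixes k m :: nat and Q :: "real poly"
  assumes "k \<ge> 1"
    and "even_poly Q"
    and "degree Q \<le> 2 * m"
  shows "\<exists>C :: nat \<Rightarrow> nat \<Rightarrow> nat \<Rightarrow> nat \<Rightarrow> real.
     (\<forall>x::real. poly Q x =
        (\<Sum>a\<in>{0..m div k}. \<Sum>b\<in>{0..<k}. \<Sum>j\<in>{0..k}. \<Sum>l\<in>{0..1::nat}.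
           C a b j l * poly (cheb a) x ^ (2 * j) * poly (cheb b) x ^ (2 * l)))
   \<and> (\<Sum>a\<in>{0..m div k}. \<Sum>b\<in>{0..<k}. \<Sum>j\<in>{0..k}. \<Sum>l\<in>{0..1::nat}. \<bar>C a b j l\<bar>)
       \<le> 3 * real k * (real (m div k) + 1) * (real (m div k) + 2)
           * (1 + sqrt 2) ^ (2 * k) * supnorm Q
   \<and> (\<forall>a\<in>{0..m div k}. \<forall>b\<in>{0..<k}. \<forall>j\<in>{0..k}. \<forall>l\<in>{0..1::nat}.
        \<exists>R :: nat \<Rightarrow> real poly.
          (\<forall>s\<in>{1..k}. R s \<in> {1, cheb a, cheb b, cheb a * cheb b}
              \<and> (even_poly (R s) \<or> odd_poly (R s))
              \<and> degree (R s) \<le> m div k + k - 1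
              \<and> supnorm (R s) \<le> 1)
          \<and> (\<forall>x::real. poly (cheb a) x ^ (2 * j) * poly (cheb b) x ^ (2 * l)
                = (\<Prod>s\<in>{1..k}. \<bar>poly (R s) x\<bar> ^ 2)))"
proof -
  obtain d where d: "\<forall>x. poly Q x = (\<Sum>n\<le>m. d n * poly (cheb (2 * n)) x)"
    using even_expand[OF assms(2,3)] by blast
  define A where "A = m div k"
  define C where "C = (\<lambda>a b j l. \<Sum>n\<in>{..m}. d n * repr k (n div k) (n mod k) a b j l)"
  have ndiv: "n div k \<le> A" if "n \<le> m" for n using that by (simp add: A_def div_le_mono)
  have nmod: "n mod k < k" for n using assms(1) by simp
  have evC: "poly Q x = ev k A C x" for x
  proof -
    have "ev k A C x = (\<Sum>n\<in>{..m}. d n * ev k A (repr k (n div k) (n mod k)) x)"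
      unfolding C_def by (rule ev_sum)
    also have "\<dots> = (\<Sum>n\<in>{..m}. d n * poly (cheb (2 * n)) x)"
    proof (rule sum.cong[OF refl])
      fix n assume "n \<in> {..m}"
      then have "ev k A (repr k (n div k) (n mod k)) x = poly (cheb (2 * (n div k * k + n mod k))) x"
        using ndiv nmod by (intro ev_repr) auto
      then show "d n * ev k A (repr k (n div k) (n mod k)) x = d n * poly (cheb (2 * n)) x"
        by simp
    qed
    finally show ?thesis using d by simp
  qed
  have nrmC: "nrm k A C \<le> 3 * real k * (real A + 1) * (real A + 2) * (1 + sqrt 2) ^ (2 * k) * supnorm Q"
  proof -
    have "nrm k A C \<le> (\<Sum>n\<in>{..m}. \<bar>d n\<bar> * nrm k A (repr k (n div k) (n mod k)))"
      unfolding C_def by (rule nrm_sum)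
    also have "\<dots> \<le> (\<Sum>n\<in>{..m}. (2 * supnorm Q) * W k (n div k) (n mod k))"
    proof (rule sum_mono)
      fix n assume n: "n \<in> {..m}"
      have "\<bar>d n\<bar> \<le> 2 * supnorm Q" using coeff_bound[OF d] n by simp
      moreover have "nrm k A (repr k (n div k) (n mod k)) \<le> W k (n div k) (n mod k)"
        using ndiv nmod n by (intro nrm_repr) auto
      moreover have "0 \<le> nrm k A (repr k (n div k) (n mod k))" unfolding nrm_def by (intro sum_nonneg) auto
      ultimately show "\<bar>d n\<bar> * nrm k A (repr k (n div k) (n mod k)) \<le> (2 * supnorm Q) * W k (n div k) (n mod k)"
        by (intro mult_mono) (auto simp: supnorm_nonneg)
    qed
    also have "\<dots> = (2 * supnorm Q) * (\<Sum>n\<le>m. W k (n div k) (n mod k))"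
      by (simp add: sum_distrib_left)
    also have "\<dots> \<le> (2 * supnorm Q) * (3 / 2 * real k * (real A + 1) * (real A + 2) * (1 + sqrt 2) ^ (2*k))"
      using total_sum[OF assms(1), of m] supnorm_nonneg[of Q] unfolding A_def
      by (intro mult_left_mono) auto
    also have "\<dots> = 3 * real k * (real A + 1) * (real A + 2) * (1 + sqrt 2) ^ (2 * k) * supnorm Q"
      by (simp add: field_simps)
    finally show ?thesis .
  qed
  show ?thesis
  proof (intro exI[of _ C] conjI)
    show "\<forall>x::real. poly Q x =
        (\<Sum>a\<in>{0..m div k}. \<Sum>b\<in>{0..<k}. \<Sum>j\<in>{0..k}. \<Sum>l\<in>{0..1::nat}.
           C a b j l * poly (cheb a) x ^ (2 * j) * poly (cheb b) x ^ (2 * l))"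
      using evC unfolding ev_def A_def by simp
    show "(\<Sum>a\<in>{0..m div k}. \<Sum>b\<in>{0..<k}. \<Sum>j\<in>{0..k}. \<Sum>l\<in>{0..1::nat}. \<bar>C a b j l\<bar>)
       \<le> 3 * real k * (real (m div k) + 1) * (real (m div k) + 2)
           * (1 + sqrt 2) ^ (2 * k) * supnorm Q"
      using nrmC unfolding nrm_def A_def by simp
    show "\<forall>a\<in>{0..m div k}. \<forall>b\<in>{0..<k}. \<forall>j\<in>{0..k}. \<forall>l\<in>{0..1::nat}.
        \<exists>R :: nat \<Rightarrow> real poly.
          (\<forall>s\<in>{1..k}. R s \<in> {1, cheb a, cheb b, cheb a * cheb b}
              \<and> (even_poly (R s) \<or> odd_poly (R s))
              \<and> degree (R s) \<le> m div k + k - 1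
              \<and> supnorm (R s) \<le> 1)
          \<and> (\<forall>x::real. poly (cheb a) x ^ (2 * j) * poly (cheb b) x ^ (2 * l)
                = (\<Prod>s\<in>{1..k}. \<bar>poly (R s) x\<bar> ^ 2))"
      using R_exists[OF assms(1)] by auto
  qed
qed

end
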